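(* Let $p\ge2$, consider the multiple regression function $f(x)=(1,x^T)^T$ on the rectangular design region $\mathcal{X}=[u_1,v_1]\times\cdots\times[u_{p-1},v_{p-1}]$ with $u_i<v_i$, and let $\beta=(\beta_0,\ldots,\beta_{p-1})^T$ with $\beta_i\neq0$ for $i=1,\ldots,p-1$. Let $d=(d_1,\ldots,d_{p-1})$ with $d_i=v_i$ if $\beta_i>0$ and $d_i=u_i$ if $\beta_i<0$. For $z>0$ let $$w_p^*(z)=\frac{2}{p+\sqrt{(p-2)^2+4(p-1)e^{z}}},\qquad w_1^*(z)=\cdots=w_{p-1}^*(z)=\frac{1-w_p^*(z)}{p-1}.$$ Then the equation $z(1-w_p^*(z))=2$ has a unique solution $z^*\in(0,\infty)$. If moreover $z^*\le\min_{i=1,\ldots,p-1}|\beta_i|(v_i-u_i)$, then the design $\xi^*$ assigning weight $w_1^*(z^* )$ to each point $d-(z^*/\beta_i)e_i$, $i=1,\ldots,p-1$, and weight $w_p^*(z^* )$ to $d$ is $D_s$-optimal for $\beta_1,\ldots,\beta_{p-1}$ in the Poisson model on $\mathcal{X}$.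
   Context: $e_i$ denotes the $i$-th standard unit vector of $\mathbb{R}^{p-1}$. A design $\xi$ is a probability measure on $\mathcal{X}$ with finite support $x_1,\ldots,x_l$ and weights $w_1,\ldots,w_l\ge0$, $\sum_jw_j=1$. The Poisson information matrix is $M_{Po}(\xi;\beta)=\sum_{j=1}^l w_j\exp(f(x_j)^T\beta)f(x_j)f(x_j)^T$. Let $A^T=(0_{p-1},I_{p-1})$ (a $(p-1)\times p$ matrix, $0_{p-1}$ the zero column). $A^T\beta$ is identifiable for $\xi$ if $A=M_{Po}(\xi;\beta)H$ for some $H\in\mathbb{R}^{p\times(p-1)}$. A design $\xi^*$ is $D_s$-optimal for $\beta_1,\ldots,\beta_{p-1}$ in the Poisson model if $A^T\beta$ is identifiable for $\xi^*$ and $\det(A^TM_{Po}(\xi^*;\beta)^-A)\le\det(A^TM_{Po}(\xi;\beta)^-A)$ for all designs $\xi$ on $\mathcal{X}$ for which $A^T\beta$ is identifiable, where $^-$ denotes a generalized inverse. *)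

theory Defs
  imports "HOL-Analysis.Analysis"
begin

text \<open>Covariates x live in R^(p-1), indexed by a finite type 'n (so p - 1 = CARD('n), p >= 2).
  Vectors in R^p (regression function values, parameter beta) are indexed by 'n option,
  where None is the intercept index 0 and Some i is index i.\<close>

definition regf :: "real^'n \<Rightarrow> real^('n option)" where
  "regf x = (\<chi> j. case j of None \<Rightarrow> 1 | Some i \<Rightarrow> x $ i)"

definition supp_design :: "(real^'n \<Rightarrow> real) \<Rightarrow> (real^'n) set" where
  "supp_design w = {x. w x \<noteq> 0}"

definition is_design :: "(real^'n) set \<Rightarrow> (real^'n \<Rightarrow> real) \<Rightarrow> bool" where
  "is_design X w \<longleftrightarrow> finite (supp_design w) \<and> (\<forall>x. 0 \<le> w x)
     \<and> supp_design w \<subseteq> X \<and> sum w (supp_design w) = 1"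

definition outer :: "real^'m \<Rightarrow> real^'m^'m" where
  "outer a = (\<chi> i j. a $ i * a $ j)"

definition M_Po :: "(real^'n \<Rightarrow> real) \<Rightarrow> real^('n option) \<Rightarrow> real^('n option)^('n option)" where
  "M_Po w \<beta> = (\<Sum>x\<in>supp_design w. (w x * exp (regf x \<bullet> \<beta>)) *\<^sub>R outer (regf x))"

definition Amat :: "real^'n^('n option)" where
  "Amat = (\<chi> j i. case j of None \<Rightarrow> 0 | Some k \<Rightarrow> (if k = i then 1 else 0))"

definition identifiable :: "(real^'n \<Rightarrow> real) \<Rightarrow> real^('n option) \<Rightarrow> bool" where
  "identifiable w \<beta> \<longleftrightarrow> (\<exists>H :: real^'n^('n option). Amat = M_Po w \<beta> ** H)"

definition ginv :: "real^'m^'m \<Rightarrow> real^'m^'m \<Rightarrow> bool" where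
  "ginv M G \<longleftrightarrow> M ** G ** M = M"

definition Ds_crit :: "real^('n::finite option)^('n option) \<Rightarrow> real" where
  "Ds_crit G = det (transpose (Amat :: real^'n^('n option)) ** G ** Amat)"

definition Ds_optimal :: "(real^'n) set \<Rightarrow> real^('n option) \<Rightarrow> (real^'n \<Rightarrow> real) \<Rightarrow> bool" where
  "Ds_optimal X \<beta> w \<longleftrightarrow> is_design X w \<and> identifiable w \<beta> \<and>
     (\<forall>w'. is_design X w' \<and> identifiable w' \<beta> \<longrightarrow>
        (\<forall>G G'. ginv (M_Po w \<beta>) G \<and> ginv (M_Po w' \<beta>) G' \<longrightarrow>
            Ds_crit (G :: real^('n option)^('n option)) \<le> Ds_crit G'))"

definition wp_star :: "nat \<Rightarrow> real \<Rightarrow> real" where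
  "wp_star p z = 2 / (real p + sqrt ((real p - 2)^2 + 4 * (real p - 1) * exp z))"

definition w1_star :: "nat \<Rightarrow> real \<Rightarrow> real" where
  "w1_star p z = (1 - wp_star p z) / (real p - 1)"

end

theory Submission
  imports Defs
begin

definition psdm :: "real^'m^'m \<Rightarrow> bool" where
  "psdm X \<longleftrightarrow> transpose X = X \<and> (\<forall>y. 0 \<le> y \<bullet> (X *v y))"

lemma mv_axis: "((X::real^'m^'k) *v axis i c) $ r = X$r$i * c"
  by (simp add: matrix_vector_mult_def axis_def if_distrib cong: if_cong)

lemma quad_axis: "axis i 1 \<bullet> ((X::real^'m^'m) *v axis i 1) = X$i$i"
  by (simp add: inner_axis' mv_axis)

lemma psdm_diag: "psdm X \<Longrightarrow> 0 \<le> X$i$i"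
  unfolding psdm_def by (metis quad_axis)

lemma quad_two:
  fixes X :: "real^'m^'m"
  assumes "transpose X = X" "k \<noteq> j"
  shows "(t *\<^sub>R axis k 1 + axis j 1) \<bullet> (X *v (t *\<^sub>R axis k 1 + axis j 1))
     = t^2 * X$k$k + 2 * t * X$k$j + X$j$j"
proof -
  have s: "X$j$k = X$k$j" using assms(1) by (metis transpose_def vec_lambda_beta)
  show ?thesis
    by (simp add: matrix_vector_right_distrib matrix_vector_mult_scaleR inner_add_left inner_add_right
        inner_axis' mv_axis s algebra_simps power2_eq_square)
qed

lemma psdm_zero_diag:
  fixes X :: "real^'m^'m"
  assumes "psdm X" "X$k$k = 0"
  shows "X$k$j = 0"
proof (cases "k = j")
  case True then show ?thesis using assms by simp
next
  case False
  show ?thesis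
  proof (rule ccontr)
    assume ne: "X$k$j \<noteq> 0"
    define t where "t = - (X$j$j + 1) / (2 * X$k$j)"
    have "0 \<le> (t *\<^sub>R axis k 1 + axis j 1) \<bullet> (X *v (t *\<^sub>R axis k 1 + axis j 1))"
      using assms(1) unfolding psdm_def by blast
    also have "\<dots> = t^2 * X$k$k + 2 * t * X$k$j + X$j$j"
      using assms(1) False unfolding psdm_def by (intro quad_two) auto
    also have "\<dots> = -1" using ne assms(2) by (simp add: t_def field_simps)
    finally show False by simp
  qed
qed

definition elimL :: "real^'m^'m \<Rightarrow> 'm \<Rightarrow> real^'m^'m" where
  "elimL X k = (\<chi> i j. (if i = j then 1 else 0) + (if j = k \<and> i \<noteq> k then - X$i$k / X$k$k else 0))"

lemma det_elimL: fixes X :: "real^'m^'m" shows "det (elimL X k) = 1"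
proof -
  define u where "u = (\<chi> j. if j \<noteq> k then - X$j$k / X$k$k else 0)"
  have tr: "transpose (elimL X k) = (\<chi> i. if i = k then row k (mat 1) + u else row i (mat 1))"
    by (auto simp: vec_eq_iff transpose_def elimL_def u_def row_def mat_def)
  have "u = (\<Sum>j\<in>UNIV - {k}. (- X$j$k / X$k$k) *s row j (mat 1))"
    by (auto simp: vec_eq_iff u_def row_def mat_def if_distrib sum.delta' cong: if_cong)
  also have "\<dots> \<in> vec.span {row j (mat 1 :: real^'m^'m) |j. j \<noteq> k}"
  proof (intro vec.span_sum)
    fix j assume "j \<in> UNIV - {k}"
    then show "(- X$j$k / X$k$k) *s row j (mat 1) \<in> vec.span {row j (mat 1 :: real^'m^'m) |j. j \<noteq> k}"
      by (intro vec.span_scale vec.span_base) auto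
  qed
  finally have "u \<in> vec.span {row j (mat 1 :: real^'m^'m) |j. j \<noteq> k}" .
  from det_row_span[OF this] have "det (transpose (elimL X k)) = det (mat 1 :: real^'m^'m)"
    unfolding tr .
  then show ?thesis by simp
qed

lemma elimL_mult_left:
  fixes X Y :: "real^'m^'m"
  shows "(elimL X k ** Y) $ i $ j = Y$i$j + (if i \<noteq> k then - X$i$k / X$k$k * Y$k$j else 0)"
proof -
  have "(elimL X k ** Y) $ i $ j = (\<Sum>m\<in>UNIV. (if m = i then Y$m$j else 0) +
      (if m = k then (if i \<noteq> k then - X$i$k / X$k$k * Y$m$j else 0) else 0))"
    by (auto simp: matrix_matrix_mult_def elimL_def distrib_right intro!: sum.cong)
  also have "\<dots> = Y$i$j + (if i \<noteq> k then - X$i$k / X$k$k * Y$k$j else 0)"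
    by (simp add: sum.distrib sum.delta)
  finally show ?thesis .
qed

lemma elimL_mult_right:
  fixes X Y :: "real^'m^'m"
  shows "(Y ** transpose (elimL X k)) $ i $ j = Y$i$j + (if j \<noteq> k then - X$j$k / X$k$k * Y$i$k else 0)"
proof -
  have "(Y ** transpose (elimL X k)) $ i $ j = (\<Sum>m\<in>UNIV. (if m = j then Y$i$m else 0) +
      (if m = k then (if j \<noteq> k then - X$j$k / X$k$k * Y$i$m else 0) else 0))"
    by (auto simp: matrix_matrix_mult_def elimL_def transpose_def distrib_left intro!: sum.cong)
  also have "\<dots> = Y$i$j + (if j \<noteq> k then - X$j$k / X$k$k * Y$i$k else 0)"
    by (simp add: sum.distrib sum.delta)
  finally show ?thesis .
qed

lemma elim_entry:
  fixes X :: "real^'m^'m" and k :: 'm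
  defines "c \<equiv> (\<lambda>i. if i \<noteq> k then - X$i$k / X$k$k else 0)"
  shows "(elimL X k ** X ** transpose (elimL X k))$i$j = X$i$j + c i * X$k$j + c j * (X$i$k + c i * X$k$k)"
  by (simp add: elimL_mult_right elimL_mult_left c_def)

lemma psdm_congr:
  fixes X L :: "real^'m^'m"
  assumes "psdm X"
  shows "psdm (L ** X ** transpose L)"
proof -
  have t: "transpose X = X" using assms psdm_def by blast
  have "transpose (L ** X ** transpose L) = L ** X ** transpose L"
    by (simp add: matrix_transpose_mul t matrix_mul_assoc)
  moreover have "0 \<le> y \<bullet> ((L ** X ** transpose L) *v y)" for y
  proof -
    have "y \<bullet> ((L ** X ** transpose L) *v y) = (transpose L *v y) \<bullet> (X *v (transpose L *v y))"
      by (simp add: matrix_vector_mul_assoc[symmetric] dot_lmul_matrix[symmetric])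
    then show ?thesis using assms unfolding psdm_def by simp
  qed
  ultimately show ?thesis unfolding psdm_def by blast
qed

lemma hadamard_aux:
  fixes S :: "'m::finite set"
  assumes "finite S"
  shows "\<forall>X::real^'m^'m. psdm X \<and> (\<forall>i j. i \<noteq> j \<and> (i \<notin> S \<or> j \<notin> S) \<longrightarrow> X$i$j = 0)
     \<longrightarrow> 0 \<le> det X \<and> det X \<le> (\<Prod>i\<in>UNIV. X$i$i)"
  using assms
proof (induction S rule: finite_induct)
  case empty
  show ?case
  proof (intro allI impI)
    fix X :: "real^'m^'m" assume h: "psdm X \<and> (\<forall>i j. i \<noteq> j \<and> (i \<notin> {} \<or> j \<notin> {}) \<longrightarrow> X$i$j = 0)"
    then have "det X = (\<Prod>i\<in>UNIV. X$i$i)" by (intro det_diagonal) auto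
    moreover have "0 \<le> (\<Prod>i\<in>UNIV. X$i$i)" using h psdm_diag by (intro prod_nonneg) auto
    ultimately show "0 \<le> det X \<and> det X \<le> (\<Prod>i\<in>UNIV. X$i$i)" by simp
  qed
next
  case (insert k S)
  show ?case
  proof (intro allI impI)
    fix X :: "real^'m^'m"
    assume h: "psdm X \<and> (\<forall>i j. i \<noteq> j \<and> (i \<notin> insert k S \<or> j \<notin> insert k S) \<longrightarrow> X$i$j = 0)"
    have ps: "psdm X" using h by blast
    have sym: "X$i$j = X$j$i" for i j using ps unfolding psdm_def by (metis transpose_def vec_lambda_beta)
    have pn: "0 \<le> (\<Prod>i\<in>UNIV. X$i$i)" using ps psdm_diag by (intro prod_nonneg) auto
    show "0 \<le> det X \<and> det X \<le> (\<Prod>i\<in>UNIV. X$i$i)"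
    proof (cases "X$k$k = 0")
      case True
      then have "row k X = 0" using psdm_zero_diag[OF ps] by (simp add: row_def vec_eq_iff)
      then have "det X = 0" by (rule det_zero_row(2))
      then show ?thesis using pn by simp
    next
      case False
      then have kpos: "X$k$k > 0" using psdm_diag[OF ps, of k] by simp
      define L where "L = elimL X k"
      define X' where "X' = L ** X ** transpose L"
      define c where "c = (\<lambda>i. if i \<noteq> k then - X$i$k / X$k$k else 0)"
      have ent: "X'$i$j = X$i$j + c i * X$k$j + c j * (X$i$k + c i * X$k$k)" for i j
        unfolding X'_def L_def c_def by (rule elim_entry)
      have ps': "psdm X'" unfolding X'_def by (rule psdm_congr[OF ps])
      have dX': "det X' = det X"
        unfolding X'_def L_def by (simp add: det_mul det_elimL)
      have ck: "i \<noteq> k \<Longrightarrow> X$i$k + c i * X$k$k = 0" for i using False by (simp add: c_def)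
      have off: "\<forall>i j. i \<noteq> j \<and> (i \<notin> S \<or> j \<notin> S) \<longrightarrow> X'$i$j = 0"
      proof (intro allI impI)
        fix i j assume ij: "i \<noteq> j \<and> (i \<notin> S \<or> j \<notin> S)"
        show "X'$i$j = 0"
        proof (cases "i = k")
          case True
          then have "j \<noteq> k" using ij by auto
          then show ?thesis using True False by (simp add: ent c_def sym[of k j])
        next
          case ik: False
          show ?thesis
          proof (cases "j = k")
            case True then show ?thesis using ik by (simp add: ent ck[OF ik])
          next
            case jk: False
            have e: "X'$i$j = X$i$j + c i * X$k$j" by (simp add: ent ck[OF ik])
            show ?thesis
            proof (cases "i \<notin> S")
              case True
              then have "X$i$j = 0" "X$i$k = 0" using h ij ik by auto
              then show ?thesis by (simp add: e c_def)
            next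
              case False
              then have "j \<notin> S" using ij by blast
              then have "X$i$j = 0" "X$k$j = 0" using h ij jk by auto
              then show ?thesis by (simp add: e)
            qed
          qed
        qed
      qed
      have IH: "0 \<le> det X' \<and> det X' \<le> (\<Prod>i\<in>UNIV. X'$i$i)" using insert.IH ps' off by blast
      have dle: "X'$i$i \<le> X$i$i" for i
      proof (cases "i = k")
        case True then show ?thesis by (simp add: ent c_def)
      next
        case ik: False
        have "X'$i$i = X$i$i - (X$i$k)^2 / X$k$k"
          using ik by (simp add: ent ck[OF ik] c_def sym[of k i] power2_eq_square)
        then show ?thesis using kpos by simp
      qed
      have "(\<Prod>i\<in>UNIV. X'$i$i) \<le> (\<Prod>i\<in>UNIV. X$i$i)"
        by (intro prod_mono) (use psdm_diag[OF ps'] dle in auto)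
      then show ?thesis using IH dX' by simp
    qed
  qed
qed

lemma hadamard:
  fixes X :: "real^'m^'m"
  assumes "psdm X"
  shows "0 \<le> det X" "det X \<le> (\<Prod>i\<in>UNIV. X$i$i)"
  using hadamard_aux[of "UNIV :: 'm set"] assms by auto

lemma det_le_one:
  fixes X :: "real^'m^'m"
  assumes "psdm X" "(\<Sum>i\<in>UNIV. X$i$i) \<le> real CARD('m)"
  shows "det X \<le> 1"
proof -
  have nn: "\<And>i. 0 \<le> X$i$i" using psdm_diag[OF assms(1)] by blast
  have "(\<Prod>i\<in>UNIV. X$i$i) powr (1 / real CARD('m)) \<le> (\<Sum>i\<in>UNIV. X$i$i / real CARD('m))"
    using arith_geom_mean[of "UNIV :: 'm set" "\<lambda>i. X$i$i"] nn by simp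
  also have "\<dots> = (\<Sum>i\<in>UNIV. X$i$i) / real CARD('m)" by (simp add: sum_divide_distrib)
  also have "\<dots> \<le> 1" using assms(2) by (simp add: divide_le_eq)
  finally have le1: "(\<Prod>i\<in>UNIV. X$i$i) powr (1 / real CARD('m)) \<le> 1" .
  have p0: "0 \<le> (\<Prod>i\<in>UNIV. X$i$i)" using nn by (intro prod_nonneg) auto
  have "(\<Prod>i\<in>UNIV. X$i$i) \<le> 1"
  proof (rule ccontr)
    assume "\<not> ?thesis"
    then have "1 < (\<Prod>i\<in>UNIV. X$i$i) powr (1 / real CARD('m))"
      by (intro gr_one_powr) auto
    then show False using le1 by simp
  qed
  then show ?thesis using hadamard(2)[OF assms(1)] by simp
qed

lemma outer_entry: "outer a $ i $ j = a$i * a$j"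
  by (simp add: outer_def)

lemma Msum_entry:
  "(\<Sum>x\<in>S. c x *\<^sub>R outer (f x :: real^'m)) $ i $ j = (\<Sum>x\<in>S. c x * (f x $ i * f x $ j))"
  by (simp add: outer_entry)

lemma Msum_sym:
  "transpose (\<Sum>x\<in>S. c x *\<^sub>R outer (f x :: real^'m)) = (\<Sum>x\<in>S. c x *\<^sub>R outer (f x))"
  by (simp add: vec_eq_iff transpose_def outer_entry mult.commute)

lemma Msum_mv:
  "(\<Sum>x\<in>S. c x *\<^sub>R outer (f x :: real^'m)) *v v = (\<Sum>x\<in>S. (c x * (f x \<bullet> v)) *\<^sub>R f x)"
proof -
  have "((\<Sum>x\<in>S. c x *\<^sub>R outer (f x :: real^'m)) *v v) $ i = (\<Sum>x\<in>S. (c x * (f x \<bullet> v)) *\<^sub>R f x) $ i" for i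
  proof -
    have "((\<Sum>x\<in>S. c x *\<^sub>R outer (f x :: real^'m)) *v v) $ i = (\<Sum>j\<in>UNIV. (\<Sum>x\<in>S. c x * (f x $ i * f x $ j)) * v $ j)"
      by (simp add: matrix_vector_mult_def outer_entry)
    also have "\<dots> = (\<Sum>x\<in>S. (\<Sum>j\<in>UNIV. c x * (f x $ i * f x $ j) * v $ j))"
      by (simp add: sum_distrib_right sum.swap[of _ UNIV S])
    also have "\<dots> = (\<Sum>x\<in>S. (c x * (f x \<bullet> v)) * f x $ i)"
      by (simp add: inner_vec_def sum_distrib_left sum_distrib_right mult_ac)
    finally show ?thesis by simp
  qed
  then show ?thesis by (simp add: vec_eq_iff)
qed

lemma Msum_bil:
  "u \<bullet> ((\<Sum>x\<in>S. c x *\<^sub>R outer (f x :: real^'m)) *v v) = (\<Sum>x\<in>S. c x * (f x \<bullet> u) * (f x \<bullet> v))"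
  by (simp add: Msum_mv inner_sum_right inner_commute mult_ac)

lemma CS_weighted:
  fixes c :: "'x \<Rightarrow> real"
  assumes "\<And>x. x \<in> S \<Longrightarrow> 0 \<le> c x"
  shows "(\<Sum>x\<in>S. c x * a x * b x)^2 \<le> (\<Sum>x\<in>S. c x * (a x)^2) * (\<Sum>x\<in>S. c x * (b x)^2)"
proof -
  have "(\<Sum>x\<in>S. (sqrt (c x) * a x) * (sqrt (c x) * b x))^2
     \<le> (\<Sum>x\<in>S. (sqrt (c x) * a x)^2) * (\<Sum>x\<in>S. (sqrt (c x) * b x)^2)"
    by (rule Cauchy_Schwarz_ineq_sum)
  moreover have "(\<Sum>x\<in>S. (sqrt (c x) * a x) * (sqrt (c x) * b x)) = (\<Sum>x\<in>S. c x * a x * b x)"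
    using assms by (intro sum.cong) (auto simp: mult_ac)
  moreover have "(\<Sum>x\<in>S. (sqrt (c x) * a x)^2) = (\<Sum>x\<in>S. c x * (a x)^2)"
    using assms by (intro sum.cong) (auto simp: power_mult_distrib)
  moreover have "(\<Sum>x\<in>S. (sqrt (c x) * b x)^2) = (\<Sum>x\<in>S. c x * (b x)^2)"
    using assms by (intro sum.cong) (auto simp: power_mult_distrib)
  ultimately show ?thesis by simp
qed

lemma core:
  fixes S :: "'x set" and c :: "'x \<Rightarrow> real" and f :: "'x \<Rightarrow> real^'m"
    and A B H :: "real^'q^'m" and T :: "real^'q^'q" and G :: "real^'m^'m"
  defines "M \<equiv> \<Sum>x\<in>S. c x *\<^sub>R outer (f x)"
  assumes fin: "finite S" and c0: "\<And>x. x\<in>S \<Longrightarrow> 0 \<le> c x"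
    and Ainj: "\<And>y. A *v y = 0 \<Longrightarrow> y = 0"
    and AB: "transpose A ** B = mat 1"
    and AMH: "A = M ** H"
    and gi: "M ** G ** M = M"
    and sens: "(\<Sum>x\<in>S. c x * ((T *v (transpose B *v f x)) \<bullet> (T *v (transpose B *v f x)))) \<le> real CARD('q)"
  shows "det (transpose T ** T) \<le> det (transpose A ** G ** A)"
proof -
  have Msym: "transpose M = M" by (simp add: M_def Msum_sym)
  have Mbil: "u \<bullet> (M *v v) = (\<Sum>x\<in>S. c x * (f x \<bullet> u) * (f x \<bullet> v))" for u v
    by (simp add: M_def Msum_bil)
  have Mpsd: "0 \<le> v \<bullet> (M *v v)" for v
    unfolding Mbil using c0 by (intro sum_nonneg) (simp add: mult.assoc)
  define R where "R = transpose A ** G ** A"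
  have R_eq: "R = transpose H ** M ** H"
  proof -
    have "R = transpose H ** (transpose M ** G ** M) ** H"
      unfolding R_def AMH by (simp add: matrix_transpose_mul matrix_mul_assoc)
    also have "\<dots> = transpose H ** M ** H" using gi Msym by simp
    finally show ?thesis .
  qed
  have quad: "y \<bullet> ((transpose K ** N ** K) *v y) = (K *v y) \<bullet> (N *v (K *v y))"
    for y and K :: "real^'a^'b" and N :: "real^'b^'b"
  proof -
    have "(transpose K ** N ** K) *v y = transpose K *v (N *v (K *v y))"
      by (metis matrix_vector_mul_assoc)
    then have "y \<bullet> ((transpose K ** N ** K) *v y) = (y v* transpose K) \<bullet> (N *v (K *v y))"
      by (simp only: dot_lmul_matrix)
    then show ?thesis by (simp only: vector_transpose_matrix)
  qed
  have Rq: "y \<bullet> (R *v y) = (H *v y) \<bullet> (M *v (H *v y))" for y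
    unfolding R_eq by (rule quad)
  have Rsym: "transpose R = R"
    unfolding R_eq by (simp add: matrix_transpose_mul Msym matrix_mul_assoc)
  have Rpsd: "psdm R" unfolding psdm_def using Rsym Rq Mpsd by simp
  have Rinj: "y = 0" if Ry: "R *v y = 0" for y
  proof -
    have "(\<Sum>x\<in>S. c x * (f x \<bullet> (H *v y)) * (f x \<bullet> (H *v y))) = 0"
      using Rq[of y] Ry Mbil by simp
    then have z: "\<forall>x\<in>S. c x * (f x \<bullet> (H *v y)) * (f x \<bullet> (H *v y)) = 0"
      using fin c0 by (subst sum_nonneg_eq_0_iff[symmetric]) (auto simp: mult.assoc)
    have "M *v (H *v y) = (\<Sum>x\<in>S. (c x * (f x \<bullet> (H *v y))) *\<^sub>R f x)"
      by (simp add: M_def Msum_mv)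
    also have "\<dots> = 0"
      using z by (intro sum.neutral) auto
    finally have "A *v y = 0" by (simp add: AMH matrix_vector_mul_assoc)
    then show ?thesis by (rule Ainj)
  qed
  obtain U where UR: "U ** R = mat 1"
    using matrix_left_invertible_ker[of R] Rinj by blast
  have RU: "R ** U = mat 1" using UR matrix_left_right_inverse by blast
  have Usym: "transpose U = U"
  proof -
    have "transpose U ** R = mat 1"
      using RU by (metis Rsym matrix_transpose_mul transpose_mat)
    then have "transpose U = (transpose U ** R) ** U"
      by (metis RU matrix_mul_assoc matrix_mul_rid)
    then show ?thesis using \<open>transpose U ** R = mat 1\<close> by simp
  qed
  have RUy: "R *v (U *v y) = y" for y
    by (simp add: matrix_vector_mul_assoc RU)
  have Uq: "y \<bullet> (U *v y) = (U *v y) \<bullet> (R *v (U *v y))" for y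
    by (simp add: RUy inner_commute)
  have Upsd: "psdm U" unfolding psdm_def using Usym Uq Rpsd unfolding psdm_def by simp
  have HMB: "transpose H ** M ** B = mat 1"
    using AB by (simp add: AMH matrix_transpose_mul Msym)
  have key: "y \<bullet> (U *v y) \<le> (B *v y) \<bullet> (M *v (B *v y))" for y
  proof -
    define x where "x = U *v y"
    define \<alpha> where "\<alpha> = (H *v x) \<bullet> (M *v (H *v x))"
    define \<beta> where "\<beta> = (B *v y) \<bullet> (M *v (B *v y))"
    have a1: "y \<bullet> (U *v y) = \<alpha>" unfolding \<alpha>_def x_def by (simp add: Uq Rq)
    have "y = (transpose H ** M ** B) *v y" by (simp add: HMB)
    then have "x \<bullet> y = x \<bullet> (transpose H *v (M *v (B *v y)))"
      by (metis matrix_vector_mul_assoc)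
    also have "\<dots> = (x v* transpose H) \<bullet> (M *v (B *v y))"
      by (simp only: dot_lmul_matrix)
    also have "\<dots> = (H *v x) \<bullet> (M *v (B *v y))"
      by (simp only: vector_transpose_matrix)
    finally have xy: "x \<bullet> y = (H *v x) \<bullet> (M *v (B *v y))" .
    have a2: "x \<bullet> y = \<alpha>" using a1 unfolding x_def by (simp add: inner_commute)
    have "\<alpha>^2 \<le> \<alpha> * \<beta>"
    proof -
      have "\<alpha>^2 = (\<Sum>x'\<in>S. c x' * (f x' \<bullet> (H *v x)) * (f x' \<bullet> (B *v y)))^2"
        using a2 xy Mbil by simp
      also have "\<dots> \<le> (\<Sum>x'\<in>S. c x' * (f x' \<bullet> (H *v x))^2) * (\<Sum>x'\<in>S. c x' * (f x' \<bullet> (B *v y))^2)"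
        by (rule CS_weighted) (use c0 in auto)
      also have "\<dots> = \<alpha> * \<beta>"
        unfolding \<alpha>_def \<beta>_def Mbil by (simp add: power2_eq_square mult_ac)
      finally show ?thesis .
    qed
    moreover have "0 \<le> \<alpha>" unfolding \<alpha>_def by (rule Mpsd)
    moreover have "0 \<le> \<beta>" unfolding \<beta>_def by (rule Mpsd)
    ultimately have "\<alpha> \<le> \<beta>"
      by (cases "\<alpha> = 0") (auto simp: power2_eq_square)
    then show ?thesis using a1 \<beta>_def by simp
  qed
  define Z where "Z = T ** U ** transpose T"
  have Zpsd: "psdm Z" unfolding Z_def by (rule psdm_congr[OF Upsd])
  define g where "g = (\<lambda>x. T *v (transpose B *v f x))"
  have diag: "Z$k$k \<le> (\<Sum>x\<in>S. c x * (g x $ k)^2)" for k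
  proof -
    define e where "e = transpose T *v axis k 1"
    have "Z$k$k = e \<bullet> (U *v e)"
    proof -
      have "Z$k$k = axis k 1 \<bullet> (Z *v axis k 1)" by (simp add: quad_axis)
      also have "\<dots> = e \<bullet> (U *v e)"
        unfolding Z_def e_def using quad[of "axis k 1" "transpose T" U] by simp
      finally show ?thesis .
    qed
    also have "\<dots> \<le> (B *v e) \<bullet> (M *v (B *v e))" by (rule key)
    also have "\<dots> = (\<Sum>x\<in>S. c x * (f x \<bullet> (B *v e))^2)"
      by (simp add: Mbil power2_eq_square mult_ac)
    also have "\<dots> = (\<Sum>x\<in>S. c x * (g x $ k)^2)"
    proof (intro sum.cong refl)
      fix x
      have "f x \<bullet> (B *v e) = (f x v* B) \<bullet> e" by (simp only: dot_lmul_matrix)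
      also have "\<dots> = ((f x v* B) v* transpose T) \<bullet> axis k 1"
        unfolding e_def by (simp only: dot_lmul_matrix)
      also have "\<dots> = (T *v (transpose B *v f x)) \<bullet> axis k 1"
        by (simp only: vector_transpose_matrix transpose_matrix_vector)
      also have "\<dots> = g x $ k" by (simp add: g_def inner_axis)
      finally show "c x * (f x \<bullet> (B *v e))^2 = c x * (g x $ k)^2" by simp
    qed
    finally show ?thesis .
  qed
  have "(\<Sum>k\<in>UNIV. Z$k$k) \<le> (\<Sum>k\<in>UNIV. \<Sum>x\<in>S. c x * (g x $ k)^2)"
    by (intro sum_mono diag)
  also have "\<dots> = (\<Sum>x\<in>S. c x * (g x \<bullet> g x))"
    by (simp add: sum.swap[of _ UNIV S] sum_distrib_left inner_vec_def power2_eq_square)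
  also have "\<dots> \<le> real CARD('q)" using sens by (simp add: g_def)
  finally have "det Z \<le> 1" by (intro det_le_one[OF Zpsd])
  moreover have "det Z = det T * det U * det T" by (simp add: Z_def det_mul)
  moreover have "det U * det R = 1" using UR by (metis det_I det_mul)
  moreover have "0 \<le> det R" by (rule hadamard(1)[OF Rpsd])
  ultimately have "det T * det T \<le> det R"
    by (smt (verit, best) mult.commute mult.left_commute mult_cancel_left1 mult_right_mono)
  then show ?thesis by (simp add: det_mul R_def)
qed

lemma sens_1d:
  fixes q a z s :: real
  assumes q1: "1 \<le> q" and a0: "0 < a" and aq: "(q+1)*a < 1" and z0: "0 < z"
    and R1: "z*(1-a) = 2" and R2: "(1-a)*(1-q*a) = q*a^2*exp z" and s0: "s \<le> 0"
  shows "exp s * ((1 - (q-1)*a)* s^2 + 2*z*a* s + q*z^2*a^2) \<le> q*z^2*a^2"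
proof -
  define c2 where "c2 = 1 - (q-1)*a"
  have "(q-1)*a \<le> (q+1)*a" using a0 by (intro mult_right_mono) auto
  then have c2pos: "0 < c2" unfolding c2_def using aq by linarith
  define r where "r = -(q*z^2*a^2 + 2*z*a)/(c2*z)"
  define h where "h = (\<lambda>s. exp s * (c2* s^2 + 2*z*a* s + q*z^2*a^2))"
  have iden: "c2*z + q*z*a^2 + 2*a = 2*z*a + 2*c2"
  proof -
    have "c2*z + q*z*a^2 + 2*a - (2*z*a + 2*c2) = (c2 - a)*(z*(1-a) - 2)"
      unfolding c2_def by (simp add: algebra_simps power2_eq_square)
    then show ?thesis using R1 by simp
  qed
  have cr: "c2*r = -(q*z*a^2 + 2*a)" unfolding r_def using c2pos z0
    by (simp add: field_simps power2_eq_square)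
  have fac: "c2*t^2 + (2*z*a + 2*c2)*t + q*z^2*a^2 + 2*z*a = c2*(t+z)*(t-r)" for t
  proof -
    have "c2*(t+z)*(t-r) = c2*t^2 + (c2*z)*t - (c2*r)*t - z*(c2*r)"
      by (simp add: algebra_simps power2_eq_square)
    also have "\<dots> = c2*t^2 + (c2*z + q*z*a^2 + 2*a)*t + q*z^2*a^2 + 2*z*a"
      unfolding cr by (simp add: algebra_simps power2_eq_square)
    finally show ?thesis using iden by simp
  qed
  have rz: "-z \<le> r"
  proof -
    have "(q-1)*a \<le> 1 - 2*a" using aq by (simp add: algebra_simps)
    then have "a*((q-1)*a) \<le> a*(1 - 2*a)" using a0 by (intro mult_left_mono) auto
    then have f1: "a*a + a*(a*q) \<le> a" by (simp add: algebra_simps)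
    have f2: "a + a*q < 1" using aq by (simp add: algebra_simps)
    have f3: "0 \<le> a*a" by simp
    have "a*q + a*(a*q) \<le> 1 + a*a" using f1 f2 f3 by linarith
    then have ineq: "a + (q-1)*a^2 \<le> 1 - (q-1)*a"
      by (simp add: algebra_simps power2_eq_square)
    have e1: "q*z*a^2 + 2*a = z*(a + (q-1)*a^2)"
    proof -
      have "z*a*(1-a) = a*(z*(1-a))" by (simp add: algebra_simps)
      then have "2*a = z*a*(1-a)" using R1 by simp
      then show ?thesis by (simp add: algebra_simps power2_eq_square)
    qed
    have "q*z*a^2 + 2*a \<le> c2*z" unfolding e1 c2_def
      using mult_left_mono[OF ineq, of z] z0 by (simp add: mult.commute)
    then have "z*(q*z*a^2 + 2*a) \<le> z*(c2*z)" using z0 by (intro mult_left_mono) auto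
    then have m: "q*z^2*a^2 + 2*z*a \<le> z*(c2*z)" by (simp add: algebra_simps power2_eq_square)
    have "0 < c2*z" using c2pos z0 by simp
    then have "(q*z^2*a^2 + 2*z*a)/(c2*z) \<le> z" using m by (simp add: pos_divide_le_eq)
    moreover have "r = - ((q*z^2*a^2 + 2*z*a)/(c2*z))" unfolding r_def by (rule minus_divide_left[symmetric])
    ultimately show ?thesis by linarith
  qed
  have der: "DERIV h t :> exp t * (c2*(t+z)*(t-r))" for t
  proof -
    have "DERIV h t :> exp t * (c2*t^2 + 2*z*a*t + q*z^2*a^2) + exp t * (2*c2*t + 2*z*a)"
      unfolding h_def by (auto intro!: derivative_eq_intros simp: power2_eq_square algebra_simps)
    moreover have "exp t * (c2*t^2 + 2*z*a*t + q*z^2*a^2) + exp t * (2*c2*t + 2*z*a)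
        = exp t * (c2*t^2 + (2*z*a + 2*c2)*t + q*z^2*a^2 + 2*z*a)" by (simp add: algebra_simps)
    moreover have "\<dots> = exp t * (c2*(t+z)*(t-r))" by (simp only: fac)
    ultimately show ?thesis by simp
  qed
  have h0: "h 0 = q*z^2*a^2" by (simp add: h_def)
  have hz: "h (-z) = q*z^2*a^2"
  proof -
    have "h (-z) = exp (-z) * z^2 * ((1-a)*(1-q*a))"
      by (simp add: h_def c2_def algebra_simps power2_eq_square)
    also have "\<dots> = exp (-z) * z^2 * (q*a^2*exp z)" by (simp only: R2)
    also have "\<dots> = exp (-z) * exp z * (q*z^2*a^2)" by (simp add: algebra_simps)
    also have "\<dots> = q*z^2*a^2" by (simp add: exp_minus field_simps)
    finally show ?thesis .
  qed
  have "h s \<le> q*z^2*a^2"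
  proof (cases "s \<le> -z")
    case True
    have "h s \<le> h (-z)"
    proof (rule DERIV_nonneg_imp_nondecreasing[OF True])
      fix t assume "s \<le> t" "t \<le> -z"
      then have "c2*(t+z) \<le> 0" using c2pos by (intro mult_nonneg_nonpos) auto
      then have "0 \<le> c2*(t+z)*(t-r)" using rz \<open>t \<le> -z\<close> by (intro mult_nonpos_nonpos) auto
      then show "\<exists>y. DERIV h t :> y \<and> 0 \<le> y" using der by (intro exI[of _ "exp t * (c2*(t+z)*(t-r))"]) simp
    qed
    then show ?thesis using hz by simp
  next
    case False
    show ?thesis
    proof (cases "s \<le> r")
      case True
      have "h s \<le> h (-z)"
      proof (rule DERIV_nonpos_imp_nonincreasing[of "-z" s h])
        show "-z \<le> s" using False by simp
        fix t assume "-z \<le> t" "t \<le> s"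
        then have "c2*(t+z)*(t-r) \<le> 0" using True c2pos by (intro mult_nonneg_nonpos) auto
        then show "\<exists>y. DERIV h t :> y \<and> y \<le> 0" using der
          by (intro exI[of _ "exp t * (c2*(t+z)*(t-r))"]) (simp add: mult_nonneg_nonpos)
      qed
      then show ?thesis using hz by simp
    next
      case rs: False
      have "h s \<le> h 0"
      proof (rule DERIV_nonneg_imp_nondecreasing[OF s0])
        fix t assume "s \<le> t" "t \<le> 0"
        then have "0 \<le> c2*(t+z)*(t-r)" using rs rz c2pos by (intro mult_nonneg_nonneg) auto
        then show "\<exists>y. DERIV h t :> y \<and> 0 \<le> y" using der by (intro exI[of _ "exp t * (c2*(t+z)*(t-r))"]) simp
      qed
      then show ?thesis using h0 by simp
    qed
  qed
  then show ?thesis by (simp add: h_def c2_def)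
qed

lemma wp_facts:
  fixes p :: nat and z :: real
  assumes p2: "2 \<le> p" and z0: "0 < z"
  defines "a \<equiv> wp_star p z" and "q \<equiv> real p - 1"
  shows "0 < a" "(q+1)*a < 1" "(1-a)*(1-q*a) = q*a^2*exp z"
proof -
  define \<sigma> where "\<sigma> = sqrt ((real p - 2)^2 + 4 * (real p - 1) * exp z)"
  have rp: "2 \<le> real p" using p2 by simp
  have s0: "0 \<le> \<sigma>" unfolding \<sigma>_def using rp by (intro real_sqrt_ge_zero add_nonneg_nonneg) auto
  have ss: "\<sigma>^2 = (real p - 2)^2 + 4 * (real p - 1) * exp z"
    unfolding \<sigma>_def using rp by (intro real_sqrt_pow2 add_nonneg_nonneg) auto
  define D where "D = real p + \<sigma>"
  have Dpos: "0 < D" unfolding D_def using rp s0 by simp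
  have aD: "a = 2 / D" unfolding a_def wp_star_def D_def \<sigma>_def by simp
  show "0 < a" using aD Dpos by simp
  have "(real p)^2 < \<sigma>^2"
  proof -
    have "1 < exp z" using z0 by simp
    then have "4 * (real p - 1) * 1 < 4 * (real p - 1) * exp z" using rp by (intro mult_strict_left_mono) auto
    then show ?thesis unfolding ss by (simp add: power2_eq_square algebra_simps)
  qed
  then have "real p < \<sigma>" using s0 rp by (smt (verit) power_mono)
  then have "2 * real p < D" unfolding D_def by simp
  then show "(q+1)*a < 1" unfolding aD q_def using Dpos by (simp add: field_simps)
  have "(D - 2) * (D - 2*q) = 4 * q * exp z"
  proof -
    have "(D - 2) * (D - 2*q) = \<sigma>^2 - (q - 1)^2"
      unfolding D_def q_def by (simp add: algebra_simps power2_eq_square)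
    also have "\<dots> = 4 * q * exp z" unfolding ss q_def by (simp add: algebra_simps power2_eq_square)
    finally show ?thesis .
  qed
  then show "(1-a)*(1-q*a) = q*a^2*exp z"
    unfolding aD using Dpos by (simp add: field_simps power2_eq_square)
qed

lemma wp_mono:
  fixes p :: nat
  assumes p2: "2 \<le> p" and "0 \<le> z1" "z1 < z2"
  shows "wp_star p z2 < wp_star p z1"
proof -
  have rp: "2 \<le> real p" using p2 by simp
  have "(real p - 2)^2 + 4 * (real p - 1) * exp z1 < (real p - 2)^2 + 4 * (real p - 1) * exp z2"
    using assms rp by (intro add_strict_left_mono mult_strict_left_mono) auto
  then have "sqrt ((real p - 2)^2 + 4 * (real p - 1) * exp z1) < sqrt ((real p - 2)^2 + 4 * (real p - 1) * exp z2)"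
    by simp
  moreover have "0 \<le> sqrt ((real p - 2)^2 + 4 * (real p - 1) * exp z1)"
    using rp by (intro real_sqrt_ge_zero add_nonneg_nonneg) auto
  ultimately show ?thesis unfolding wp_star_def using rp
    by (intro divide_strict_left_mono) (auto intro!: mult_pos_pos add_pos_nonneg)
qed

lemma wp_lt1:
  fixes p :: nat
  assumes p2: "2 \<le> p" and "0 \<le> z"
  shows "wp_star p z < 1"
proof -
  have rp: "2 \<le> real p" using p2 by simp
  have "0 < (real p - 2)^2 + 4 * (real p - 1) * exp z"
    using rp by (intro add_nonneg_pos) auto
  then have "0 < sqrt ((real p - 2)^2 + 4 * (real p - 1) * exp z)" by simp
  then have "2 < real p + sqrt ((real p - 2)^2 + 4 * (real p - 1) * exp z)" using rp by linarith
  then show ?thesis unfolding wp_star_def by (simp add: divide_less_eq)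
qed

lemma z_unique:
  fixes p :: nat
  assumes p2: "2 \<le> p"
  shows "\<exists>!z. 0 < z \<and> z * (1 - wp_star p z) = 2"
proof -
  define g where "g = (\<lambda>z. z * (1 - wp_star p z))"
  have rp: "2 \<le> real p" using p2 by simp
  have cont: "continuous_on {0..4} g"
  proof -
    have "\<And>z. 0 < real p + sqrt ((real p - 2)^2 + 4 * (real p - 1) * exp z)"
      using rp by (intro add_pos_nonneg real_sqrt_ge_zero add_nonneg_nonneg) auto
    then show ?thesis unfolding g_def wp_star_def
      by (intro continuous_intros) (auto simp: less_imp_neq[symmetric])
  qed
  have g4: "2 \<le> g 4"
  proof -
    have "wp_star p 4 < 1 / 2"
    proof -
      have f1: "real p * wp_star p 4 < 1" using wp_facts(2)[OF p2, of 4] by simp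
      moreover have "0 < wp_star p 4" using wp_facts(1)[OF p2, of 4] by simp
      moreover have "2 * wp_star p 4 \<le> real p * wp_star p 4"
        using rp \<open>0 < wp_star p 4\<close> by (intro mult_right_mono) auto
      ultimately have "2 * wp_star p 4 < 1" using f1 by linarith
      then show ?thesis by simp
    qed
    then show ?thesis unfolding g_def by simp
  qed
  have "\<exists>x\<ge>0. x \<le> 4 \<and> g x = 2"
    by (rule IVT') (use g4 cont in \<open>auto simp: g_def\<close>)
  then obtain z where z: "0 \<le> z" "z \<le> 4" "g z = 2" by blast
  then have "z \<noteq> 0" by (auto simp: g_def)
  then have ex: "0 < z \<and> z * (1 - wp_star p z) = 2" using z by (auto simp: g_def)
  have gmono: "g z1 < g z2" if "0 < z1" "z1 < z2" for z1 z2
  proof -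
    have "wp_star p z2 < wp_star p z1" using wp_mono[OF p2] that by simp
    moreover have "0 < 1 - wp_star p z1" using wp_lt1[OF p2] that by simp
    ultimately have "z1 * (1 - wp_star p z1) < z2 * (1 - wp_star p z1)"
      using that by simp
    also have "\<dots> < z2 * (1 - wp_star p z2)"
      using that \<open>wp_star p z2 < wp_star p z1\<close> by simp
    finally show ?thesis unfolding g_def .
  qed
  show ?thesis
  proof (rule ex1I[of _ z])
    show "0 < z \<and> z * (1 - wp_star p z) = 2" by (rule ex)
    fix y assume y: "0 < y \<and> y * (1 - wp_star p y) = 2"
    show "y = z"
    proof (rule ccontr)
      assume "y \<noteq> z"
      then consider "y < z" | "z < y" by linarith
      then show False
      proof cases
        case 1 then have "g y < g z" using y gmono by blast
        then show False using y ex by (simp add: g_def)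
      next
        case 2 then have "g z < g y" using ex gmono by blast
        then show False using y ex by (simp add: g_def)
      qed
    qed
  qed
qed

lemma sum_option: "(\<Sum>m\<in>(UNIV :: 'a::finite option set). g m) = g None + (\<Sum>i\<in>UNIV. g (Some i))"
  by (simp add: UNIV_option_conv sum.reindex)

lemma regf_None [simp]: "regf x $ None = 1" by (simp add: regf_def)
lemma regf_Some [simp]: "regf x $ Some i = x $ i" by (simp add: regf_def)

lemma regf_inner: "regf x \<bullet> \<beta> = \<beta> $ None + (\<Sum>i\<in>UNIV. x$i * \<beta> $ Some i)"
  by (simp add: inner_vec_def sum_option)

locale pset =
  fixes u v :: "real^'n" and \<beta> :: "real^('n option)" and z :: real
  assumes uv: "\<forall>i. u $ i < v $ i"
    and beta_nz: "\<forall>i. \<beta> $ Some i \<noteq> 0"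
    and z0: "0 < z"
    and zeq: "z * (1 - wp_star (CARD('n) + 1) z) = 2"
    and zle: "\<forall>i. z \<le> \<bar>\<beta> $ Some i\<bar> * (v $ i - u $ i)"
begin

definition "qq = real CARD('n)"
definition "pp = CARD('n) + 1"
definition "a = wp_star pp z"
definition "w1 = w1_star pp z"
definition "bt i = \<beta> $ Some i"
definition "dd = ((\<chi> i. if \<beta> $ Some i > 0 then v $ i else u $ i) :: real^'n)"
definition "XX = {x :: real^'n. \<forall>i. u $ i \<le> x $ i \<and> x $ i \<le> v $ i}"
definition "PP i = dd - (z / \<beta> $ Some i) *\<^sub>R axis i 1"
definition "wd = (\<lambda>x. (if x = dd then wp_star pp z else 0) +
              (\<Sum>i\<in>UNIV. if x = dd - (z / \<beta> $ Some i) *\<^sub>R axis i 1 then w1_star pp z else 0))"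

lemma qq1: "1 \<le> qq" unfolding qq_def by simp
lemma pp2: "2 \<le> pp" unfolding pp_def by simp
lemma rpp: "real pp - 1 = qq" unfolding pp_def qq_def by simp
lemma bt_nz: "bt i \<noteq> 0" using beta_nz by (simp add: bt_def)

lemma a_pos: "0 < a" unfolding a_def using wp_facts(1)[OF pp2 z0] .
lemma a_lt: "(qq+1)*a < 1" unfolding a_def using wp_facts(2)[OF pp2 z0] rpp by simp
lemma R2: "(1-a)*(1-qq*a) = qq*a^2*exp z" unfolding a_def using wp_facts(3)[OF pp2 z0] rpp by simp
lemma R1: "z*(1-a) = 2" using zeq unfolding a_def pp_def by simp
lemma w1_eq: "w1 = (1-a)/qq" unfolding w1_def w1_star_def a_def using rpp by simp
lemma qa_lt: "qq*a < 1" using a_lt a_pos by (simp add: algebra_simps)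
lemma w1_pos: "0 < w1" unfolding w1_eq using qa_lt a_pos qq1
  by (smt (verit) divide_pos_pos mult_le_cancel_right1)
lemma R2': "w1 * (1 - qq*a) = a^2 * exp z"
  using R2 qq1 unfolding w1_eq by (simp add: field_simps)
lemma sum_w: "a + qq * w1 = 1" unfolding w1_eq using qq1 by simp

lemma PP_comp: "PP k $ i = dd $ i - (if i = k then z / bt k else 0)"
  by (simp add: PP_def bt_def axis_def)

lemma PP_ne_dd: "PP k \<noteq> dd"
proof
  assume "PP k = dd"
  then have "PP k $ k = dd $ k" by simp
  then show False using z0 bt_nz[of k] by (simp add: PP_comp)
qed

lemma PP_inj: "PP k = PP l \<longleftrightarrow> k = l"
proof
  assume h: "PP k = PP l"
  show "k = l"
  proof (rule ccontr)
    assume "k \<noteq> l"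
    have "PP k $ k = PP l $ k" using h by simp
    then show False using \<open>k \<noteq> l\<close> z0 bt_nz[of k] by (simp add: PP_comp)
  qed
qed simp

lemma wd_alt: "wd x = (if x = dd then a else 0) + (\<Sum>i\<in>UNIV. if x = PP i then w1 else 0)"
  unfolding wd_def a_def w1_def PP_def by simp

lemma wd_dd: "wd dd = a"
  unfolding wd_alt using PP_ne_dd by (simp add: eq_commute[of dd])

lemma wd_PP: "wd (PP k) = w1"
proof -
  have "(\<Sum>i\<in>UNIV. if PP k = PP i then w1 else 0) = (\<Sum>i\<in>UNIV. if i = k then w1 else 0)"
    by (intro sum.cong) (auto simp: PP_inj)
  then show ?thesis unfolding wd_alt using PP_ne_dd by simp
qed

lemma wd_other: "x \<noteq> dd \<Longrightarrow> x \<notin> range PP \<Longrightarrow> wd x = 0"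
  unfolding wd_alt by (auto intro!: sum.neutral)

lemma supp_wd: "supp_design wd = insert dd (range PP)"
proof -
  have "wd x \<noteq> 0 \<longleftrightarrow> x \<in> insert dd (range PP)" for x
  proof (cases "x = dd")
    case True then show ?thesis using wd_dd a_pos by simp
  next
    case False
    show ?thesis
    proof (cases "x \<in> range PP")
      case True then obtain k where "x = PP k" by blast
      then show ?thesis using wd_PP w1_pos by simp
    next
      case F2: False then show ?thesis using wd_other False by simp
    qed
  qed
  then show ?thesis unfolding supp_design_def by blast
qed

lemma dd_in: "dd \<in> XX"
  unfolding XX_def dd_def using uv by (auto simp: less_imp_le)

lemma PP_in: "PP k \<in> XX"
proof -
  have "u $ i \<le> PP k $ i \<and> PP k $ i \<le> v $ i" for i
  proof (cases "i = k")
    case False then show ?thesis using dd_in by (simp add: PP_comp XX_def)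
  next
    case True
    have zl: "z \<le> \<bar>bt k\<bar> * (v $ k - u $ k)" using zle by (simp add: bt_def)
    have uvk: "u $ k < v $ k" using uv by simp
    show ?thesis
    proof (cases "bt k > 0")
      case pos: True
      then have "z / bt k \<le> v $ k - u $ k" using zl by (simp add: divide_le_eq mult.commute)
      moreover have "0 < z / bt k" using pos z0 by simp
      ultimately show ?thesis using True pos uvk by (simp add: PP_comp dd_def bt_def)
    next
      case neg: False
      then have btn: "bt k < 0" using bt_nz[of k] by linarith
      have "z \<le> (v $ k - u $ k) * (- bt k)" using zl btn by (simp add: mult.commute)
      moreover have "0 < - bt k" using btn by simp
      ultimately have "z / (- bt k) \<le> v $ k - u $ k" using pos_divide_le_eq[of "-bt k" z "v $ k - u $ k"] by blast
      moreover have "0 < z / (- bt k)" using btn z0 by (intro divide_pos_pos) auto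
      ultimately show ?thesis using True btn uvk by (simp add: PP_comp dd_def bt_def)
    qed
  qed
  then show ?thesis unfolding XX_def by blast
qed

lemma is_design_wd: "is_design XX wd"
proof -
  have fin: "finite (supp_design wd)" unfolding supp_wd by simp
  have nn: "0 \<le> wd x" for x
    unfolding wd_alt using a_pos w1_pos by (intro add_nonneg_nonneg sum_nonneg) auto
  have sub: "supp_design wd \<subseteq> XX" unfolding supp_wd using dd_in PP_in by auto
  have "sum wd (supp_design wd) = wd dd + (\<Sum>k\<in>UNIV. wd (PP k))"
  proof -
    have "dd \<notin> range PP" using PP_ne_dd by (metis rangeE)
    then show ?thesis unfolding supp_wd
      by (subst sum.insert) (auto simp: sum.reindex inj_on_def PP_inj)
  qed
  also have "\<dots> = 1" using sum_w by (simp add: wd_dd wd_PP qq_def)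
  finally show ?thesis unfolding is_design_def using fin nn sub by blast
qed

end

lemma Msum_mm:
  "((\<Sum>x\<in>S. c x *\<^sub>R outer (f x :: real^'m)) ** (Y::real^'q^'m)) $ j $ l
     = (\<Sum>x\<in>S. c x * f x $ j * (\<Sum>m\<in>UNIV. f x $ m * Y $ m $ l))"
proof -
  have "((\<Sum>x\<in>S. c x *\<^sub>R outer (f x :: real^'m)) ** Y) $ j $ l
      = (\<Sum>m\<in>UNIV. (\<Sum>x\<in>S. c x * (f x $ j * f x $ m)) * Y $ m $ l)"
    by (simp add: matrix_matrix_mult_def outer_entry)
  also have "\<dots> = (\<Sum>x\<in>S. \<Sum>m\<in>UNIV. c x * f x $ j * (f x $ m * Y $ m $ l))"
    by (simp add: sum_distrib_right sum_distrib_left sum.swap[of _ UNIV S] mult_ac)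
  also have "\<dots> = (\<Sum>x\<in>S. c x * f x $ j * (\<Sum>m\<in>UNIV. f x $ m * Y $ m $ l))"
    by (simp add: sum_distrib_left)
  finally show ?thesis .
qed

lemma col_BC:
  "(\<Sum>m\<in>UNIV. (f::real^'m) $ m * (B ** (C::real^'q^'q)) $ m $ l) = (\<Sum>i\<in>UNIV. (f v* B) $ i * C $ i $ l)"
proof -
  have "(\<Sum>m\<in>UNIV. f $ m * (B ** C) $ m $ l) = (\<Sum>m\<in>UNIV. \<Sum>i\<in>UNIV. f $ m * B $ m $ i * C $ i $ l)"
    by (simp add: matrix_matrix_mult_def sum_distrib_left mult_ac)
  also have "\<dots> = (\<Sum>i\<in>UNIV. \<Sum>m\<in>UNIV. f $ m * B $ m $ i * C $ i $ l)"
    by (rule sum.swap)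
  also have "\<dots> = (\<Sum>i\<in>UNIV. (f v* B) $ i * C $ i $ l)"
    by (simp add: vector_matrix_mult_def sum_distrib_right sum_distrib_left mult_ac)
  finally show ?thesis .
qed

context pset
begin

definition "k0 = regf dd \<bullet> \<beta>"
definition "tau2 = exp (- k0) / (z^2 * a^2)"
definition "Bm = ((\<chi> j l. (case j of None \<Rightarrow> z * a / bt l - dd $ l | Some m \<Rightarrow> (if m = l then 1 else 0))) :: real^'n^('n option))"
definition "Cm = ((\<chi> i l. tau2 * bt i * bt l * ((1 - qq*a) * (if i = l then 1 else 0) + a)) :: real^'n^'n)"
definition "rho = sqrt (1 - qq*a)"
definition "tau = exp (- k0 / 2) / (z * a)"
definition "Tm = ((\<chi> k j. tau * (rho * (if k = j then 1 else 0) + (1 - rho)/qq) * bt j) :: real^'n^'n)"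

lemma regf_PP: "regf (PP k) \<bullet> \<beta> = k0 - z"
proof -
  have "(\<Sum>i\<in>UNIV. PP k $ i * \<beta> $ Some i) = (\<Sum>i\<in>UNIV. dd $ i * \<beta> $ Some i - (if i = k then z else 0))"
    by (intro sum.cong) (auto simp: PP_comp bt_def left_diff_distrib beta_nz)
  also have "\<dots> = (\<Sum>i\<in>UNIV. dd $ i * \<beta> $ Some i) - z"
    by (simp add: sum_subtractf)
  finally show ?thesis by (simp add: k0_def regf_inner)
qed

lemma vB: "(regf x v* Bm) $ i = z * a / bt i + (x $ i - dd $ i)"
proof -
  have "(regf x v* Bm) $ i = (\<Sum>m\<in>UNIV. Bm $ m $ i * regf x $ m)"
    by (simp add: vector_matrix_mult_def mult.commute)
  also have "\<dots> = (z * a / bt i - dd $ i) + (\<Sum>m\<in>UNIV. (if m = i then 1 else 0) * x $ m)"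
    by (simp add: sum_option Bm_def)
  also have "(\<Sum>m\<in>UNIV. (if m = i then 1 else 0) * x $ m) = (\<Sum>m\<in>UNIV. if m = i then x $ m else 0)"
    by (rule sum.cong) auto
  also have "\<dots> = x $ i" by simp
  also have "z * a / bt i - dd $ i + x $ i = z * a / bt i + (x $ i - dd $ i)" by simp
  finally show ?thesis .
qed

lemma sumC: "(\<Sum>i\<in>UNIV. (g i / bt i) * Cm $ i $ l) = tau2 * bt l * ((1 - qq*a) * g l + a * (\<Sum>i\<in>UNIV. g i))"
proof -
  have "(\<Sum>i\<in>UNIV. (g i / bt i) * Cm $ i $ l)
      = (\<Sum>i\<in>UNIV. (tau2 * bt l * (1 - qq*a)) * (if i = l then g i else 0) + (tau2 * bt l * a) * g i)"
  proof (intro sum.cong refl)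
    fix i
    have "(g i / bt i) * Cm $ i $ l = (g i / bt i * bt i) * (tau2 * bt l * ((1 - qq*a) * (if i = l then 1 else 0) + a))"
      by (simp add: Cm_def mult_ac)
    also have "\<dots> = g i * (tau2 * bt l * ((1 - qq*a) * (if i = l then 1 else 0) + a))"
      using bt_nz[of i] by simp
    also have "\<dots> = (tau2 * bt l * (1 - qq*a)) * (if i = l then g i else 0) + (tau2 * bt l * a) * g i"
      by (simp add: algebra_simps)
    finally show "(g i / bt i) * Cm $ i $ l = (tau2 * bt l * (1 - qq*a)) * (if i = l then g i else 0) + (tau2 * bt l * a) * g i" .
  qed
  also have "\<dots> = (tau2 * bt l * (1 - qq*a)) * g l + (tau2 * bt l * a) * (\<Sum>i\<in>UNIV. g i)"
    by (simp add: sum.distrib sum_distrib_left[symmetric] sum.delta')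
  also have "\<dots> = tau2 * bt l * ((1 - qq*a) * g l + a * (\<Sum>i\<in>UNIV. g i))"
    by (simp add: algebra_simps)
  finally show ?thesis .
qed

lemma colC_dd: "(\<Sum>m\<in>UNIV. regf dd $ m * (Bm ** Cm) $ m $ l) = tau2 * bt l * z * a"
proof -
  have "(\<Sum>m\<in>UNIV. regf dd $ m * (Bm ** Cm) $ m $ l) = (\<Sum>i\<in>UNIV. ((\<lambda>_. z*a) i / bt i) * Cm $ i $ l)"
    unfolding col_BC vB by (intro sum.cong) auto
  also have "\<dots> = tau2 * bt l * ((1 - qq*a) * (z*a) + a * (\<Sum>i\<in>(UNIV::'n set). z*a))"
    using sumC[of "\<lambda>_. z*a" l] by simp
  also have "\<dots> = tau2 * bt l * z * a" by (simp add: qq_def[symmetric] algebra_simps)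
  finally show ?thesis .
qed

lemma colC_PP: "(\<Sum>m\<in>UNIV. regf (PP k) $ m * (Bm ** Cm) $ m $ l)
    = - tau2 * bt l * (1 - qq*a) * z * (if k = l then 1 else 0)"
proof -
  define g where "g = (\<lambda>i. z*a - (if i = k then z else 0))"
  have "(\<Sum>m\<in>UNIV. regf (PP k) $ m * (Bm ** Cm) $ m $ l) = (\<Sum>i\<in>UNIV. (g i / bt i) * Cm $ i $ l)"
    unfolding col_BC vB
  proof (intro sum.cong refl)
    fix i
    have "z * a / bt i + (PP k $ i - dd $ i) = g i / bt i"
      using bt_nz[of i] by (auto simp: PP_comp g_def diff_divide_distrib)
    then show "(z * a / bt i + (PP k $ i - dd $ i)) * Cm $ i $ l = g i / bt i * Cm $ i $ l" by simp
  qed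
  also have "\<dots> = tau2 * bt l * ((1 - qq*a) * g l + a * (\<Sum>i\<in>UNIV. g i))"
    by (rule sumC)
  also have "(\<Sum>i\<in>UNIV. g i) = qq * (z*a) - z" by (simp add: g_def sum_subtractf qq_def)
  also have "tau2 * bt l * ((1 - qq*a) * g l + a * (qq * (z*a) - z)) = - tau2 * bt l * (1 - qq*a) * z * (if k = l then 1 else 0)"
    by (simp add: g_def algebra_simps)
  finally show ?thesis .
qed

end

lemma eval_crit:
  fixes M G :: "real^'m^'m" and A B :: "real^'q^'m" and C :: "real^'q^'q"
  assumes Ms: "transpose M = M" and AM: "A = M ** (B ** C)" and AB: "transpose A ** B = mat 1"
    and Cs: "transpose C = C" and gi: "M ** G ** M = M"
  shows "transpose A ** G ** A = C"
proof -
  have tA: "transpose A = transpose C ** transpose B ** M"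
    unfolding AM by (simp add: matrix_transpose_mul Ms matrix_mul_assoc)
  have "transpose A ** G ** A = (transpose C ** transpose B ** M) ** G ** (M ** (B ** C))"
    by (simp only: tA[symmetric] AM[symmetric])
  also have "\<dots> = transpose C ** transpose B ** (M ** G ** M) ** (B ** C)"
    by (simp add: matrix_mul_assoc)
  also have "\<dots> = transpose C ** transpose B ** A"
    unfolding gi AM by (simp add: matrix_mul_assoc)
  also have "\<dots> = transpose C ** transpose (transpose A ** B)"
    by (simp add: matrix_transpose_mul matrix_mul_assoc)
  also have "\<dots> = C" using AB Cs by simp
  finally show ?thesis .
qed

lemma sq_sum_le:
  fixes t :: "'a \<Rightarrow> real"
  assumes "finite S" "\<And>i. i \<in> S \<Longrightarrow> t i \<le> 0"
  shows "(\<Sum>i\<in>S. (t i)^2) \<le> (\<Sum>i\<in>S. t i)^2"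
  using assms
proof (induction S rule: finite_induct)
  case empty then show ?case by simp
next
  case (insert k S)
  have IH: "(\<Sum>i\<in>S. (t i)^2) \<le> (\<Sum>i\<in>S. t i)^2" using insert by auto
  have "t k \<le> 0" using insert by auto
  moreover have "(\<Sum>i\<in>S. t i) \<le> 0" using insert by (intro sum_nonpos) auto
  ultimately have "0 \<le> t k * (\<Sum>i\<in>S. t i)" by (rule mult_nonpos_nonpos)
  then show ?case using insert IH by (simp add: power2_eq_square algebra_simps)
qed

context pset
begin

lemma MPo_eq: "M_Po wd \<beta> = (\<Sum>x\<in>insert dd (range PP). (wd x * exp (regf x \<bullet> \<beta>)) *\<^sub>R outer (regf x))"
  unfolding M_Po_def supp_wd ..

lemma dd_notin: "dd \<notin> range PP" using PP_ne_dd by (metis rangeE)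

lemma C1: "M_Po wd \<beta> ** (Bm ** Cm) = Amat"
proof -
  have "(M_Po wd \<beta> ** (Bm ** Cm)) $ j $ l = Amat $ j $ l" for j l
  proof -
    have "(M_Po wd \<beta> ** (Bm ** Cm)) $ j $ l
      = (\<Sum>x\<in>insert dd (range PP). (wd x * exp (regf x \<bullet> \<beta>)) * regf x $ j * (\<Sum>m\<in>UNIV. regf x $ m * (Bm ** Cm) $ m $ l))"
      unfolding MPo_eq by (rule Msum_mm)
    also have "\<dots> = a * exp k0 * regf dd $ j * (tau2 * bt l * z * a)
        + (\<Sum>k\<in>UNIV. w1 * exp (k0 - z) * regf (PP k) $ j * (- tau2 * bt l * (1 - qq*a) * z * (if k = l then 1 else 0)))"
      using dd_notin by (simp add: sum.reindex inj_on_def PP_inj wd_dd wd_PP colC_dd colC_PP regf_PP k0_def)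
    also have "\<dots> = a * exp k0 * regf dd $ j * (tau2 * bt l * z * a)
        - w1 * exp (k0 - z) * regf (PP l) $ j * (tau2 * bt l * (1 - qq*a) * z)"
      by (simp add: if_distrib sum.delta cong: if_cong)
    also have "w1 * exp (k0 - z) * regf (PP l) $ j * (tau2 * bt l * (1 - qq*a) * z)
        = (w1 * (1 - qq*a)) * exp (-z) * exp k0 * regf (PP l) $ j * (tau2 * bt l * z)"
      by (simp add: exp_diff exp_minus field_simps)
    also have "\<dots> = a^2 * exp k0 * regf (PP l) $ j * (tau2 * bt l * z)"
      unfolding R2' by (simp add: exp_minus field_simps)
    finally have e: "(M_Po wd \<beta> ** (Bm ** Cm)) $ j $ l
        = a^2 * exp k0 * (tau2 * bt l * z) * (regf dd $ j - regf (PP l) $ j)"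
      by (simp add: algebra_simps power2_eq_square)
    show ?thesis
    proof (cases j)
      case None then show ?thesis using e by (simp add: Amat_def)
    next
      case (Some m)
      have "a^2 * exp k0 * (tau2 * bt l * z) * (dd $ m - PP l $ m) = (if m = l then 1 else 0)"
      proof (cases "m = l")
        case True
        have "a^2 * exp k0 * (tau2 * bt l * z) * (z / bt l) = a^2 * z^2 * exp k0 * tau2"
          using bt_nz[of l] by (simp add: field_simps power2_eq_square)
        also have "\<dots> = 1" using a_pos z0 by (simp add: tau2_def exp_minus field_simps)
        finally show ?thesis using True by (simp add: PP_comp)
      qed (simp add: PP_comp)
      then show ?thesis using e unfolding Some by (simp add: Amat_def)
    qed
  qed
  then show ?thesis by (simp add: vec_eq_iff)
qed

lemma C2: "transpose (Amat :: real^'n^('n option)) ** Bm = mat 1"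
proof -
  have "(transpose (Amat :: real^'n^('n option)) ** Bm) $ i $ l = mat 1 $ i $ l" for i l
  proof -
    have "(transpose (Amat :: real^'n^('n option)) ** Bm) $ i $ l = (\<Sum>m\<in>UNIV. (if m = i then 1 else 0) * (if m = l then 1 else 0))"
      by (simp add: matrix_matrix_mult_def transpose_def Amat_def sum_option Bm_def)
    also have "\<dots> = (\<Sum>m\<in>UNIV. if m = i then (if i = l then 1 else 0) else 0)"
      by (rule sum.cong) auto
    also have "\<dots> = mat 1 $ i $ l" by (simp add: mat_def)
    finally show ?thesis .
  qed
  then show ?thesis by (simp add: vec_eq_iff)
qed

lemma Ainj: "(Amat :: real^'n^('n option)) *v y = 0 \<Longrightarrow> y = 0"
proof -
  assume h: "(Amat :: real^'n^('n option)) *v y = 0"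
  have "y $ i = 0" for i
  proof -
    have "((Amat :: real^'n^('n option)) *v y) $ Some i = (\<Sum>j\<in>UNIV. (if i = j then 1 else 0) * y $ j)"
      by (simp add: matrix_vector_mult_def Amat_def)
    also have "\<dots> = (\<Sum>j\<in>UNIV. if j = i then y $ i else 0)" by (rule sum.cong) auto
    also have "\<dots> = y $ i" by simp
    finally show ?thesis using h by simp
  qed
  then show "y = 0" by (simp add: vec_eq_iff)
qed

lemma Cs: "transpose Cm = Cm"
  by (simp add: vec_eq_iff transpose_def Cm_def mult_ac eq_commute)

lemma rho_sq: "rho^2 = 1 - qq*a" unfolding rho_def using qa_lt by simp
lemma tau_sq: "tau^2 = tau2"
proof -
  have "exp (- k0 / 2)^2 = exp (- k0)" by (simp add: exp_double[symmetric])
  then show ?thesis unfolding tau_def tau2_def by (simp add: power_divide power_mult_distrib)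
qed
lemma nu_id: "2 * rho * ((1 - rho)/qq) + qq * ((1 - rho)/qq)^2 = a"
proof -
  have "2 * rho * ((1 - rho)/qq) + qq * ((1 - rho)/qq)^2 = (1 - rho^2)/qq"
    using qq1 by (simp add: field_simps power2_eq_square)
  also have "\<dots> = a" using qq1 by (simp add: rho_sq)
  finally show ?thesis .
qed

lemma C3: "Cm = transpose Tm ** Tm"
proof -
  have "(transpose Tm ** Tm) $ i $ l = Cm $ i $ l" for i l
  proof -
    define nu where "nu = (1 - rho)/qq"
    have "(transpose Tm ** Tm) $ i $ l = (\<Sum>k\<in>UNIV. tau^2 * bt i * bt l * ((rho * (if k = i then 1 else 0) + nu) * (rho * (if k = l then 1 else 0) + nu)))"
      by (simp add: matrix_matrix_mult_def transpose_def Tm_def nu_def power2_eq_square mult_ac)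
    also have "\<dots> = tau^2 * bt i * bt l * (\<Sum>k\<in>UNIV. (rho * (if k = i then 1 else 0) + nu) * (rho * (if k = l then 1 else 0) + nu))"
      by (simp add: sum_distrib_left)
    also have "(\<Sum>k\<in>UNIV. (rho * (if k = i then 1 else 0) + nu) * (rho * (if k = l then 1 else 0) + nu))
       = (\<Sum>k\<in>UNIV. (if k = i then (if i = l then rho^2 else 0) else 0)
        + (if k = i then rho * nu else 0) + (if k = l then rho * nu else 0) + nu^2)"
      by (rule sum.cong) (auto simp: algebra_simps power2_eq_square)
    also have "tau^2 * bt i * bt l * (\<Sum>k\<in>UNIV. (if k = i then (if i = l then rho^2 else 0) else 0)
        + (if k = i then rho * nu else 0) + (if k = l then rho * nu else 0) + nu^2)
        = tau^2 * bt i * bt l * (rho^2 * (if i = l then 1 else 0) + 2 * rho * nu + qq * nu^2)"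
      by (simp add: sum.distrib qq_def)
    also have "\<dots> = Cm $ i $ l"
      using nu_id unfolding nu_def[symmetric] by (simp add: Cm_def tau_sq rho_sq mult_ac)
    finally show ?thesis .
  qed
  then show ?thesis by (simp add: vec_eq_iff)
qed

end

lemma sum_lin3: "(\<Sum>k\<in>(UNIV::'n::finite set). A * f k + B * g k + C) = A * (\<Sum>k\<in>UNIV. f k) + B * (\<Sum>k\<in>UNIV. g k) + real CARD('n) * (C::real)"
  by (simp add: sum.distrib sum_distrib_left)

context pset
begin

lemma t_nonpos: "x \<in> XX \<Longrightarrow> bt i * (x $ i - dd $ i) \<le> 0"
proof -
  assume x: "x \<in> XX"
  then have ux: "u $ i \<le> x $ i" "x $ i \<le> v $ i" by (auto simp: XX_def)
  show ?thesis
  proof (cases "bt i > 0")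
    case True
    then have "dd $ i = v $ i" by (simp add: dd_def bt_def)
    then show ?thesis using True ux by (simp add: mult_nonneg_nonpos)
  next
    case False
    then have "dd $ i = u $ i" by (simp add: dd_def bt_def)
    then show ?thesis using False ux by (simp add: mult_nonpos_nonneg)
  qed
qed

lemma sens:
  assumes x: "x \<in> XX"
  shows "exp (regf x \<bullet> \<beta>) * ((Tm *v (transpose Bm *v regf x)) \<bullet> (Tm *v (transpose Bm *v regf x))) \<le> qq"
proof -
  define t where "t i = bt i * (x $ i - dd $ i)" for i
  define s where "s = (\<Sum>i\<in>UNIV. t i)"
  define w where "w i = z * a + t i" for i
  define W where "W = (\<Sum>i\<in>UNIV. w i)"
  define nu where "nu = (1 - rho)/qq"
  define vv where "vv = transpose Bm *v regf x"
  have vv_i: "bt i * vv $ i = w i" for i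
    using bt_nz[of i] by (simp add: vv_def vB w_def t_def field_simps)
  have W_eq: "W = qq * z * a + s" by (simp add: W_def w_def s_def sum.distrib qq_def)
  have Tv: "(Tm *v vv) $ k = tau * (rho * w k + nu * W)" for k
  proof -
    have "(Tm *v vv) $ k = (\<Sum>j\<in>UNIV. tau * ((if k = j then rho * w j else 0) + nu * w j))"
      by (auto simp: matrix_vector_mult_def Tm_def nu_def vv_i[symmetric] algebra_simps intro!: sum.cong)
    also have "\<dots> = tau * (rho * w k + nu * W)"
      by (simp add: sum_distrib_left[symmetric] sum.distrib W_def)
    finally show ?thesis .
  qed
  have nrm: "(Tm *v vv) \<bullet> (Tm *v vv) = tau2 * ((1 - qq*a) * (\<Sum>k\<in>UNIV. (w k)^2) + a * W^2)"
  proof -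
    have "(Tm *v vv) \<bullet> (Tm *v vv) = (\<Sum>k\<in>UNIV. (tau^2 * rho^2) * (w k)^2 + (tau^2 * 2 * rho * nu * W) * w k + tau^2 * nu^2 * W^2)"
      by (simp add: inner_vec_def Tv power2_eq_square algebra_simps)
    also have "\<dots> = (tau^2 * rho^2) * (\<Sum>k\<in>UNIV. (w k)^2) + (tau^2 * 2 * rho * nu * W) * W + qq * (tau^2 * nu^2 * W^2)"
      unfolding sum_lin3 W_def qq_def ..
    also have "\<dots> = tau^2 * (rho^2 * (\<Sum>k\<in>UNIV. (w k)^2) + (2 * rho * nu + qq * nu^2) * W^2)"
      by (simp add: algebra_simps power2_eq_square)
    also have "\<dots> = tau2 * ((1 - qq*a) * (\<Sum>k\<in>UNIV. (w k)^2) + a * W^2)"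
      using nu_id unfolding nu_def[symmetric] by (simp add: tau_sq rho_sq)
    finally show ?thesis .
  qed
  have ex: "regf x \<bullet> \<beta> = k0 + s"
  proof -
    have "(\<Sum>i\<in>UNIV. x $ i * \<beta> $ Some i) = (\<Sum>i\<in>UNIV. dd $ i * \<beta> $ Some i) + s"
      by (simp add: s_def t_def bt_def sum.distrib[symmetric] algebra_simps)
    then show ?thesis by (simp add: k0_def regf_inner)
  qed
  have sn: "s \<le> 0" unfolding s_def t_def using t_nonpos[OF x] by (intro sum_nonpos) auto
  have sq: "(\<Sum>k\<in>UNIV. (w k)^2) \<le> qq * z^2 * a^2 + 2 * z * a * s + s^2"
  proof -
    have "(\<Sum>k\<in>UNIV. (w k)^2) = qq * z^2 * a^2 + 2 * z * a * s + (\<Sum>k\<in>UNIV. (t k)^2)"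
      by (simp add: w_def power2_eq_square algebra_simps sum.distrib sum_distrib_right sum_distrib_left s_def qq_def)
    moreover have "(\<Sum>k\<in>UNIV. (t k)^2) \<le> s^2"
      unfolding s_def by (rule sq_sum_le) (use t_nonpos[OF x] in \<open>auto simp: t_def\<close>)
    ultimately show ?thesis by simp
  qed
  have qa1: "0 \<le> 1 - qq*a" using qa_lt by simp
  have tau2pos: "0 < tau2" unfolding tau2_def using a_pos z0 by simp
  have "(1 - qq*a) * (\<Sum>k\<in>UNIV. (w k)^2) + a * W^2
      \<le> (1 - qq*a) * (qq * z^2 * a^2 + 2 * z * a * s + s^2) + a * W^2"
    using mult_left_mono[OF sq qa1] by simp
  also have "\<dots> = (1 - (qq-1)*a) * s^2 + 2*z*a* s + qq*z^2*a^2"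
    unfolding W_eq by (simp add: algebra_simps power2_eq_square)
  finally have b1: "(1 - qq*a) * (\<Sum>k\<in>UNIV. (w k)^2) + a * W^2 \<le> (1 - (qq-1)*a) * s^2 + 2*z*a* s + qq*z^2*a^2" .
  have "exp (regf x \<bullet> \<beta>) * ((Tm *v vv) \<bullet> (Tm *v vv))
      = exp s * (exp k0 * tau2) * ((1 - qq*a) * (\<Sum>k\<in>UNIV. (w k)^2) + a * W^2)"
    by (simp add: ex nrm exp_add mult_ac)
  also have "exp k0 * tau2 = 1 / (z^2 * a^2)" by (simp add: tau2_def exp_minus field_simps)
  also have "exp s * (1 / (z^2 * a^2)) * ((1 - qq*a) * (\<Sum>k\<in>UNIV. (w k)^2) + a * W^2)
      \<le> exp s * (1 / (z^2 * a^2)) * ((1 - (qq-1)*a) * s^2 + 2*z*a* s + qq*z^2*a^2)"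
    using b1 by (intro mult_left_mono) auto
  also have "\<dots> = (exp s * ((1 - (qq-1)*a) * s^2 + 2*z*a* s + qq*z^2*a^2)) / (z^2 * a^2)"
    by simp
  also have "\<dots> \<le> (qq*z^2*a^2) / (z^2 * a^2)"
    using sens_1d[OF qq1 a_pos a_lt z0 R1 R2 sn] a_pos z0 by (intro divide_right_mono) auto
  also have "\<dots> = qq" using a_pos z0 by simp
  finally show ?thesis unfolding vv_def .
qed

end

context pset
begin

lemma MPo_sym: "transpose (M_Po w \<beta>) = M_Po w \<beta>"
  unfolding M_Po_def by (rule Msum_sym)

lemma Ds_opt: "Ds_optimal XX \<beta> wd"
proof -
  have ident: "identifiable wd \<beta>" unfolding identifiable_def using C1 by metis
  have crit: "Ds_crit G \<le> Ds_crit G'"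
    if w': "is_design XX w'" "identifiable w' \<beta>" and gG: "ginv (M_Po wd \<beta>) G" "ginv (M_Po w' \<beta>) G'"
    for w' G G'
  proof -
    have "transpose (Amat :: real^'n^('n option)) ** G ** Amat = Cm"
      by (rule eval_crit[OF MPo_sym C1[symmetric] C2 Cs]) (use gG in \<open>simp add: ginv_def\<close>)
    then have l: "Ds_crit G = det Cm" by (simp add: Ds_crit_def)
    obtain H where H: "(Amat :: real^'n^('n option)) = M_Po w' \<beta> ** H"
      using w'(2) unfolding identifiable_def by blast
    have fin: "finite (supp_design w')" and nn: "\<And>x. 0 \<le> w' x" and sub: "supp_design w' \<subseteq> XX"
      and s1: "sum w' (supp_design w') = 1"
      using w'(1) unfolding is_design_def by auto
    have sens_sum: "(\<Sum>x\<in>supp_design w'. (w' x * exp (regf x \<bullet> \<beta>)) *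
        ((Tm *v (transpose Bm *v regf x)) \<bullet> (Tm *v (transpose Bm *v regf x)))) \<le> real CARD('n)"
    proof -
      have "(\<Sum>x\<in>supp_design w'. (w' x * exp (regf x \<bullet> \<beta>)) *
          ((Tm *v (transpose Bm *v regf x)) \<bullet> (Tm *v (transpose Bm *v regf x))))
          \<le> (\<Sum>x\<in>supp_design w'. w' x * qq)"
      proof (intro sum_mono)
        fix x assume "x \<in> supp_design w'"
        then have "x \<in> XX" using sub by blast
        then have "exp (regf x \<bullet> \<beta>) * ((Tm *v (transpose Bm *v regf x)) \<bullet> (Tm *v (transpose Bm *v regf x))) \<le> qq"
          by (rule sens)
        then show "(w' x * exp (regf x \<bullet> \<beta>)) * ((Tm *v (transpose Bm *v regf x)) \<bullet> (Tm *v (transpose Bm *v regf x)))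
            \<le> w' x * qq"
          using nn[of x] by (simp add: mult.assoc mult_left_mono)
      qed
      also have "\<dots> = qq" using s1 by (simp add: sum_distrib_right[symmetric])
      finally show ?thesis by (simp add: qq_def)
    qed
    have "det (transpose Tm ** Tm) \<le> det (transpose (Amat :: real^'n^('n option)) ** G' ** Amat)"
    proof (rule core[where S = "supp_design w'" and c = "\<lambda>x. w' x * exp (regf x \<bullet> \<beta>)" and f = regf and H = H])
      show "finite (supp_design w')" by (rule fin)
      show "\<And>x. x \<in> supp_design w' \<Longrightarrow> 0 \<le> w' x * exp (regf x \<bullet> \<beta>)" using nn by simp
      show "\<And>y. (Amat :: real^'n^('n option)) *v y = 0 \<Longrightarrow> y = 0" by (rule Ainj)
      show "transpose (Amat :: real^'n^('n option)) ** Bm = mat 1" by (rule C2)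
      show "(Amat :: real^'n^('n option)) = (\<Sum>x\<in>supp_design w'. (w' x * exp (regf x \<bullet> \<beta>)) *\<^sub>R outer (regf x)) ** H"
        using H by (simp add: M_Po_def)
      show "(\<Sum>x\<in>supp_design w'. (w' x * exp (regf x \<bullet> \<beta>)) *\<^sub>R outer (regf x)) ** G' **
            (\<Sum>x\<in>supp_design w'. (w' x * exp (regf x \<bullet> \<beta>)) *\<^sub>R outer (regf x)) =
            (\<Sum>x\<in>supp_design w'. (w' x * exp (regf x \<bullet> \<beta>)) *\<^sub>R outer (regf x))"
        using gG(2) by (simp add: ginv_def M_Po_def)
      show "(\<Sum>x\<in>supp_design w'. (w' x * exp (regf x \<bullet> \<beta>)) *
        ((Tm *v (transpose Bm *v regf x)) \<bullet> (Tm *v (transpose Bm *v regf x)))) \<le> real CARD('n)"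
        by (rule sens_sum)
    qed
    then show ?thesis using l C3 by (simp add: Ds_crit_def)
  qed
  show ?thesis unfolding Ds_optimal_def using is_design_wd ident crit by blast
qed

end

theorem theorem9:
  fixes u v :: "real^'n" and \<beta> :: "real^('n option)"
  defines "p \<equiv> CARD('n) + 1"
  defines "X \<equiv> {x :: real^'n. \<forall>i. u $ i \<le> x $ i \<and> x $ i \<le> v $ i}"
  defines "d \<equiv> (\<chi> i. if \<beta> $ Some i > 0 then v $ i else u $ i) :: real^'n"
  assumes uv: "\<forall>i. u $ i < v $ i"
  assumes beta_nz: "\<forall>i. \<beta> $ Some i \<noteq> 0"
  shows "(\<exists>!z. 0 < z \<and> z * (1 - wp_star p z) = 2) \<and>
    (\<forall>z. 0 < z \<and> z * (1 - wp_star p z) = 2 \<and> (\<forall>i. z \<le> \<bar>\<beta> $ Some i\<bar> * (v $ i - u $ i)) \<longrightarrow>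
       Ds_optimal X \<beta>
         (\<lambda>x. (if x = d then wp_star p z else 0) +
              (\<Sum>i\<in>UNIV. if x = d - (z / \<beta> $ Some i) *\<^sub>R axis i 1 then w1_star p z else 0)))"
proof
  show "\<exists>!z. 0 < z \<and> z * (1 - wp_star p z) = 2" unfolding p_def by (rule z_unique) simp
  show "\<forall>z. 0 < z \<and> z * (1 - wp_star p z) = 2 \<and> (\<forall>i. z \<le> \<bar>\<beta> $ Some i\<bar> * (v $ i - u $ i)) \<longrightarrow>
       Ds_optimal X \<beta>
         (\<lambda>x. (if x = d then wp_star p z else 0) +
              (\<Sum>i\<in>UNIV. if x = d - (z / \<beta> $ Some i) *\<^sub>R axis i 1 then w1_star p z else 0))"
  proof (intro allI impI)
    fix z assume h: "0 < z \<and> z * (1 - wp_star p z) = 2 \<and> (\<forall>i. z \<le> \<bar>\<beta> $ Some i\<bar> * (v $ i - u $ i))"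
    interpret P: pset u v \<beta> z
      using h uv beta_nz unfolding p_def by unfold_locales auto
    show "Ds_optimal X \<beta>
         (\<lambda>x. (if x = d then wp_star p z else 0) +
              (\<Sum>i\<in>UNIV. if x = d - (z / \<beta> $ Some i) *\<^sub>R axis i 1 then w1_star p z else 0))"
      using P.Ds_opt unfolding P.XX_def P.wd_def P.dd_def P.pp_def X_def d_def p_def .
  qed
qed

end
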